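(* Let $\delta>0$, $n\ge1$, let $w\in\mathbb{R}^n$ satisfy $w_1\ge w_2\ge\dots\ge w_n\ge0$, and let $\tilde w$ be its sparsification with respect to $P_{n,\delta}$. Then for every $v\in\mathbb{R}^n_{\ge0}$, $\mathrm{cost}(\tilde w;v)\le\mathrm{cost}(w;v)\le(1+\delta)\,\mathrm{cost}(\tilde w;v)$.
   Context: $P_{n,\delta}=\{\min\{\lceil(1+\delta)^s\rceil,n\}:s\in\mathbb{Z}_{\ge0}\}$; for $\ell\in P_{n,\delta}$ with $\ell<n$, $\mathrm{next}(\ell)$ is the smallest element of $P_{n,\delta}$ larger than $\ell$. The sparsification $\tilde w\in\mathbb{R}^n$ is defined by $\tilde w_i=w_i$ if $i\in P_{n,\delta}$, and $\tilde w_i=w_{\mathrm{next}(\ell)}$ if $\ell\in P_{n,\delta}$ and $\ell<i<\mathrm{next}(\ell)$. For a non-increasing $u$, $\mathrm{cost}(u;v)=\sum_{i=1}^n u_iv^\downarrow_i$, with $v^\downarrow$ the non-increasing rearrangement of $v$. *)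

theory Defs
  imports Complex_Main
begin

text \<open>Vectors in R^n are functions nat => real, using coordinates 1..n.\<close>

definition Pset :: "nat \<Rightarrow> real \<Rightarrow> nat set" where
  "Pset n \<delta> = {min (nat \<lceil>(1 + \<delta>) ^ s\<rceil>) n | s :: nat. True}"

definition nextP :: "nat \<Rightarrow> real \<Rightarrow> nat \<Rightarrow> nat" where
  "nextP n \<delta> l = (LEAST m. m \<in> Pset n \<delta> \<and> l < m)"

definition sparsify :: "nat \<Rightarrow> real \<Rightarrow> (nat \<Rightarrow> real) \<Rightarrow> (nat \<Rightarrow> real)" where
  "sparsify n \<delta> w i =
     (if i \<in> Pset n \<delta> then w i
      else (THE x. \<exists>l \<in> Pset n \<delta>. l < n \<and> l < i \<and> i < nextP n \<delta> l \<and> x = w (nextP n \<delta> l)))"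

definition vdown :: "nat \<Rightarrow> (nat \<Rightarrow> real) \<Rightarrow> nat \<Rightarrow> real" where
  "vdown n v i = rev (sort (map v [1..<n+1])) ! (i - 1)"

definition cost :: "nat \<Rightarrow> (nat \<Rightarrow> real) \<Rightarrow> (nat \<Rightarrow> real) \<Rightarrow> real" where
  "cost n u v = (\<Sum>i = 1..n. u i * vdown n v i)"

end

theory Submission
  imports Defs
begin

lemma mono_chain:
  fixes u :: "nat \<Rightarrow> real"
  assumes "\<forall>i\<in>{1..<m}. u (i+1) \<le> u i" "1 \<le> i" "i \<le> j" "j \<le> m"
  shows "u j \<le> u i"
  using assms(3,4)
proof (induction j)
  case 0 then show ?case using assms(2) by simp
next
  case (Suc j)
  show ?case
  proof (cases "i = Suc j")
    case True then show ?thesis by simp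
  next
    case False
    then have "i \<le> j" using Suc by simp
    then have "u j \<le> u i" using Suc by simp
    moreover have "u (j+1) \<le> u j" using assms(1) Suc \<open>i \<le> j\<close> assms(2) by auto
    ultimately show ?thesis by simp
  qed
qed

lemma abel:
  fixes u b c :: "nat \<Rightarrow> real"
  assumes "\<forall>i\<in>{1..<m}. u (i+1) \<le> u i" "\<forall>i\<in>{1..m}. u i \<ge> 0"
    "\<forall>t\<in>{1..m}. (\<Sum>i=1..t. b i) \<le> (\<Sum>i=1..t. c i)"
  shows "(\<Sum>i=1..m. u i * b i) \<le> (\<Sum>i=1..m. u i * c i)"
  using assms
proof (induction m arbitrary: u)
  case 0 then show ?case by simp
next
  case (Suc m)
  define u' where "u' i = u i - u (Suc m)" for i
  have m1: "\<forall>i\<in>{1..<m}. u' (i+1) \<le> u' i" using Suc.prems(1) by (auto simp: u'_def)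
  have m2: "\<forall>i\<in>{1..m}. u' i \<ge> 0"
  proof
    fix i assume "i \<in> {1..m}"
    then show "u' i \<ge> 0" using mono_chain[OF Suc.prems(1), of i "Suc m"] by (auto simp: u'_def)
  qed
  have m3: "\<forall>t\<in>{1..m}. (\<Sum>i=1..t. b i) \<le> (\<Sum>i=1..t. c i)" using Suc.prems(3) by auto
  have IH: "(\<Sum>i=1..m. u' i * b i) \<le> (\<Sum>i=1..m. u' i * c i)" using Suc.IH[OF m1 m2 m3] .
  have eq: "(\<Sum>i=1..Suc m. u i * f i) = (\<Sum>i=1..m. u' i * f i) + u (Suc m) * (\<Sum>i=1..Suc m. f i)" for f
    by (simp add: u'_def algebra_simps sum_distrib_left sum_subtractf)
  have "u (Suc m) * (\<Sum>i=1..Suc m. b i) \<le> u (Suc m) * (\<Sum>i=1..Suc m. c i)"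
  proof (rule mult_left_mono)
    show "(\<Sum>i=1..Suc m. b i) \<le> (\<Sum>i=1..Suc m. c i)" using bspec[OF Suc.prems(3), of "Suc m"] by simp
    show "0 \<le> u (Suc m)" using Suc.prems(2) by simp
  qed
  then show ?case using IH eq[of b] eq[of c] by linarith
qed

lemma ratio:
  fixes a :: "nat \<Rightarrow> real"
  assumes "\<forall>i\<in>{1..<n}. a (i+1) \<le> a i" "\<forall>i\<in>{1..n}. a i \<ge> 0" "q \<le> t" "t \<le> n"
  shows "real q * (\<Sum>i=1..t. a i) \<le> real t * (\<Sum>i=1..q. a i)"
  using assms(3,4)
proof (induction t)
  case 0 then show ?case by simp
next
  case (Suc t)
  show ?case
  proof (cases "q = Suc t")
    case True then show ?thesis by simp
  next
    case False
    then have qt: "q \<le> t" using Suc by simp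
    then have IH: "real q * (\<Sum>i=1..t. a i) \<le> real t * (\<Sum>i=1..q. a i)" using Suc by simp
    have "(\<Sum>i=1..q. a (Suc t)) \<le> (\<Sum>i=1..q. a i)"
      by (rule sum_mono) (use mono_chain[OF assms(1)] qt Suc in auto)
    then have "real q * a (Suc t) \<le> (\<Sum>i=1..q. a i)" by simp
    then show ?thesis using IH by (simp add: algebra_simps)
  qed
qed

lemma pow_bracket:
  fixes x t :: real
  assumes "1 \<le> t" "1 < x"
  shows "\<exists>s. x^s \<le> t \<and> t < x^Suc s"
proof -
  obtain N where N: "t < x^N" using real_arch_pow[OF assms(2)] by blast
  have "t < x^N \<Longrightarrow> \<exists>s. x^s \<le> t \<and> t < x^Suc s"
  proof (induction N)
    case 0 then show ?case using assms by simp
  next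
    case (Suc N)
    show ?case
    proof (cases "t < x^N")
      case True then show ?thesis using Suc by blast
    next
      case False then show ?thesis using Suc by (auto simp: not_less)
    qed
  qed
  then show ?thesis using N by blast
qed

lemma vdown_props:
  assumes "\<forall>i \<in> {1..n}. v i \<ge> 0"
  shows "\<forall>i\<in>{1..n}. vdown n v i \<ge> 0" "\<forall>i\<in>{1..<n}. vdown n v (i+1) \<le> vdown n v i"
proof -
  define ys where "ys = sort (map v [1..<n+1])"
  have len: "length ys = n" by (simp add: ys_def)
  have vd: "vdown n v i = ys ! (n - i)" if "1 \<le> i" "i \<le> n" for i
  proof -
    have "vdown n v i = rev ys ! (i - 1)" unfolding vdown_def ys_def by simp
    also have "\<dots> = ys ! (n - i)" using that len by (simp add: rev_nth Suc_diff_le)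
    finally show ?thesis .
  qed
  have st: "sorted ys" by (simp add: ys_def)
  show "\<forall>i\<in>{1..n}. vdown n v i \<ge> 0"
  proof
    fix i assume i: "i \<in> {1..n}"
    have "ys ! (n - i) \<in> set ys" using i len by auto
    then have "ys ! (n-i) \<in> v ` {1..n}" by (auto simp: ys_def)
    then show "vdown n v i \<ge> 0" using vd i assms by auto
  qed
  show "\<forall>i\<in>{1..<n}. vdown n v (i+1) \<le> vdown n v i"
  proof
    fix i assume i: "i \<in> {1..<n}"
    have "ys ! (n - (i+1)) \<le> ys ! (n - i)" using sorted_nth_mono[OF st] i len by auto
    then show "vdown n v (i+1) \<le> vdown n v i" using vd i by auto
  qed
qed


theorem mainTheorem12:
  fixes \<delta> :: real and n :: nat and w v :: "nat \<Rightarrow> real"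
  assumes "\<delta> > 0" and "n \<ge> 1"
    and "\<forall>i \<in> {1..<n}. w (i + 1) \<le> w i" and "w n \<ge> 0"
    and "\<forall>i \<in> {1..n}. v i \<ge> 0"
  shows "cost n (sparsify n \<delta> w) v \<le> cost n w v \<and>
         cost n w v \<le> (1 + \<delta>) * cost n (sparsify n \<delta> w) v"
proof -
  define P where "P = Pset n \<delta>"
  have Pmem: "x \<in> P \<longleftrightarrow> (\<exists>s::nat. x = min (nat \<lceil>(1 + \<delta>) ^ s\<rceil>) n)" for x
    by (auto simp: P_def Pset_def)
  have Psub: "P \<subseteq> {1..n}"
  proof
    fix x assume "x \<in> P"
    then obtain s where s: "x = min (nat \<lceil>(1 + \<delta>) ^ s\<rceil>) n" using Pmem by blast
    have "(1::real) \<le> (1 + \<delta>) ^ s" using assms(1) by (simp add: one_le_power)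
    then have "1 \<le> nat \<lceil>(1 + \<delta>) ^ s\<rceil>" by linarith
    then show "x \<in> {1..n}" using s assms(2) by auto
  qed
  have Pfin: "finite P" using Psub finite_subset by blast
  have P1: "1 \<in> P" using Pmem[of 1] assms(2) by (metis ceiling_one min_def nat_one_as_int power_0)
  have Pn: "n \<in> P"
  proof -
    obtain s where s: "real n < (1 + \<delta>) ^ s" using real_arch_pow[of "1+\<delta>" "real n"] assms(1) by auto
    then have "n \<le> nat \<lceil>(1 + \<delta>) ^ s\<rceil>" by linarith
    then show ?thesis using Pmem[of n] by (metis min.absorb2)
  qed
  define p where "p i = (LEAST m. m \<in> P \<and> i \<le> m)" for i
  have pP: "p i \<in> P \<and> i \<le> p i" if "i \<le> n" for i
    unfolding p_def by (rule LeastI[of _ n]) (use Pn that in auto)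
  have pmin: "p i \<le> m" if "m \<in> P" "i \<le> m" for i m
    unfolding p_def by (rule Least_le) (use that in auto)
  define q where "q t = Max {m\<in>P. m \<le> t}" for t
  have qP: "q t \<in> P \<and> q t \<le> t" if "1 \<le> t" for t
  proof -
    have "{m\<in>P. m \<le> t} \<noteq> {}" using P1 that by auto
    then have "q t \<in> {m\<in>P. m \<le> t}" unfolding q_def using Pfin by (intro Max_in) auto
    then show ?thesis by auto
  qed
  have qmax: "m \<le> q t" if "m \<in> P" "m \<le> t" for m t
    unfolding q_def using Pfin that by (intro Max_ge) auto
  have nxt: "nextP n \<delta> l \<in> P \<and> l < nextP n \<delta> l" if "l < n" for l
    unfolding nextP_def P_def[symmetric] by (rule LeastI[of _ n]) (use Pn that in auto)
  have nxtmin: "nextP n \<delta> l \<le> m" if "m \<in> P" "l < m" for l m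
    unfolding nextP_def P_def[symmetric] by (rule Least_le) (use that in auto)
  have nxtp: "nextP n \<delta> l = p i" if "l \<in> P" "l < n" "l < i" "i < nextP n \<delta> l" "i \<le> n" for l i
  proof -
    have "p i \<le> nextP n \<delta> l" using pmin nxt that by (meson less_imp_le)
    moreover have "nextP n \<delta> l \<le> p i" using nxtmin pP that by (meson less_le_trans)
    ultimately show ?thesis by simp
  qed
  have sw: "sparsify n \<delta> w i = w (p i)" if i: "i \<in> {1..n}" for i
  proof (cases "i \<in> P")
    case True
    then have "p i = i" using pmin[of i i] pP[of i] i by auto
    then show ?thesis using True by (simp add: sparsify_def P_def)
  next
    case False
    define l where "l = q i"
    have l1: "l \<in> P" "l < i" using qP[of i] i False unfolding l_def by (auto simp: le_less)
    have l2: "l < n" using l1 i by auto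
    have l3: "i < nextP n \<delta> l"
    proof (rule ccontr)
      assume "\<not> i < nextP n \<delta> l"
      then have "nextP n \<delta> l \<le> l" using qmax[of "nextP n \<delta> l" i] nxt[OF l2] unfolding l_def by auto
      then show False using nxt[OF l2] by simp
    qed
    have "(THE x. \<exists>l \<in> P. l < n \<and> l < i \<and> i < nextP n \<delta> l \<and> x = w (nextP n \<delta> l)) = w (p i)"
    proof (rule the_equality)
      show "\<exists>l \<in> P. l < n \<and> l < i \<and> i < nextP n \<delta> l \<and> w (p i) = w (nextP n \<delta> l)"
      proof (rule bexI[of _ l])
        show "l < n \<and> l < i \<and> i < nextP n \<delta> l \<and> w (p i) = w (nextP n \<delta> l)"
          using l1(2) l2 l3 nxtp[OF l1(1) l2 l1(2) l3] i by simp
      qed (rule l1(1))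
      show "x = w (p i)" if "\<exists>l \<in> P. l < n \<and> l < i \<and> i < nextP n \<delta> l \<and> x = w (nextP n \<delta> l)" for x
        using that nxtp i by auto
    qed
    then show ?thesis using False by (simp add: sparsify_def P_def)
  qed
  have qbound: "real t \<le> (1 + \<delta>) * real (q t)" if t: "t \<in> {1..n}" for t
  proof -
    obtain s where s: "(1+\<delta>)^s \<le> real t" "real t < (1+\<delta>)^Suc s"
      using pow_bracket[of "real t" "1+\<delta>"] t assms(1) by auto
    define m where "m = nat \<lceil>(1 + \<delta>) ^ s\<rceil>"
    have "m \<le> t" using s(1) unfolding m_def by (simp add: nat_le_iff ceiling_le_iff)
    then have "m \<in> P" using Pmem[of m] t unfolding m_def by (metis atLeastAtMost_iff min.absorb1 order_trans)
    then have "m \<le> q t" using qmax \<open>m \<le> t\<close> by blast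
    have "(1+\<delta>)^s \<le> real m" unfolding m_def by linarith
    then have "real t < (1+\<delta>) * real m" using s(2) assms(1) by (simp add: mult_left_mono less_le_trans)
    also have "\<dots> \<le> (1+\<delta>) * real (q t)" using \<open>m \<le> q t\<close> assms(1) by simp
    finally show ?thesis by simp
  qed
  define a where "a = vdown n v"
  have a0: "\<forall>i\<in>{1..n}. a i \<ge> 0" and amono: "\<forall>i\<in>{1..<n}. a (i+1) \<le> a i"
    using vdown_props[OF assms(5)] unfolding a_def by auto
  have w0: "\<forall>i\<in>{1..n}. w i \<ge> 0" using mono_chain[OF assms(3)] assms(4) by (meson atLeastAtMost_iff order.trans order_refl)
  have ineq1: "cost n (sparsify n \<delta> w) v \<le> cost n w v"
    unfolding cost_def a_def[symmetric]
  proof (rule sum_mono)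
    fix i assume i: "i \<in> {1..n}"
    have "w (p i) \<le> w i" using mono_chain[OF assms(3), of i "p i"] pP[of i] Psub i by auto
    then show "sparsify n \<delta> w i * a i \<le> w i * a i" using sw[OF i] a0 i by (simp add: mult_right_mono)
  qed
  define c where "c i = (1+\<delta>) * (\<Sum>j=1..n. if p j = i then a j else 0)" for i
  have pref: "(\<Sum>i=1..t. a i) \<le> (\<Sum>i=1..t. c i)" if t: "t \<in> {1..n}" for t
  proof -
    have "(\<Sum>i=1..t. c i) = (1+\<delta>) * (\<Sum>i=1..t. \<Sum>j=1..n. if p j = i then a j else 0)"
      by (simp add: c_def sum_distrib_left)
    also have "(\<Sum>i=1..t. \<Sum>j=1..n. if p j = i then a j else 0) = (\<Sum>j=1..n. \<Sum>i=1..t. if p j = i then a j else 0)"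
      by (rule sum.swap)
    also have "\<dots> = (\<Sum>j=1..n. if j \<le> q t then a j else 0)"
    proof (rule sum.cong[OF refl])
      fix j assume j: "j \<in> {1..n}"
      have "p j \<le> t \<longleftrightarrow> j \<le> q t"
      proof
        assume "p j \<le> t" then show "j \<le> q t" using qmax[of "p j" t] pP[of j] j by auto
      next
        assume "j \<le> q t" then show "p j \<le> t" using pmin[of "q t" j] qP[of t] t by auto
      qed
      moreover have "p j \<ge> 1" using pP[of j] j by auto
      ultimately show "(\<Sum>i=1..t. if p j = i then a j else 0) = (if j \<le> q t then a j else 0)"
        by (simp add: sum.delta')
    qed
    also have "\<dots> = (\<Sum>j\<in>{j\<in>{1..n}. j \<le> q t}. a j)" by (rule sum.inter_filter[symmetric]) simp
    also have "{j\<in>{1..n}. j \<le> q t} = {1..q t}" using qP[of t] t by auto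
    finally have ceq: "(\<Sum>i=1..t. c i) = (1+\<delta>) * (\<Sum>j=1..q t. a j)" .
    have qt: "q t \<le> t" "1 \<le> q t" using qP[of t] Psub t by auto
    have A0: "0 \<le> (\<Sum>j=1..q t. a j)" using a0 qt t by (intro sum_nonneg) auto
    have "real (q t) * (\<Sum>i=1..t. a i) \<le> real t * (\<Sum>j=1..q t. a j)"
      using ratio[OF amono a0 qt(1)] t by auto
    also have "\<dots> \<le> ((1+\<delta>) * real (q t)) * (\<Sum>j=1..q t. a j)"
      using qbound[OF t] A0 by (rule mult_right_mono)
    finally have "real (q t) * (\<Sum>i=1..t. a i) \<le> real (q t) * ((1+\<delta>) * (\<Sum>j=1..q t. a j))"
      by (simp add: algebra_simps)
    then have "(\<Sum>i=1..t. a i) \<le> (1+\<delta>) * (\<Sum>j=1..q t. a j)"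
      using qt by (simp add: mult_le_cancel_left_pos)
    then show ?thesis using ceq by simp
  qed
  have ab: "(\<Sum>i=1..n. w i * a i) \<le> (\<Sum>i=1..n. w i * c i)"
    by (rule abel[OF assms(3) w0]) (use pref in auto)
  have "(\<Sum>i=1..n. w i * c i) = (1+\<delta>) * (\<Sum>i=1..n. \<Sum>j=1..n. if p j = i then w i * a j else 0)"
    by (simp add: c_def sum_distrib_left algebra_simps if_distrib cong: if_cong)
  also have "(\<Sum>i=1..n. \<Sum>j=1..n. if p j = i then w i * a j else 0) = (\<Sum>j=1..n. \<Sum>i=1..n. if p j = i then w i * a j else 0)"
    by (rule sum.swap)
  also have "\<dots> = (\<Sum>j=1..n. sparsify n \<delta> w j * a j)"
  proof (rule sum.cong[OF refl])
    fix j assume j: "j \<in> {1..n}"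
    have "p j \<in> {1..n}" using pP[of j] Psub j by auto
    then show "(\<Sum>i=1..n. if p j = i then w i * a j else 0) = sparsify n \<delta> w j * a j"
      using sw[OF j] by (simp add: sum.delta')
  qed
  finally have "cost n w v \<le> (1 + \<delta>) * cost n (sparsify n \<delta> w) v"
    using ab unfolding cost_def a_def[symmetric] by simp
  then show ?thesis using ineq1 by simp
qed

end
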